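(* Let $d\ge 2$ and let $V$ be a finite subset of the unit sphere $S^{d-1}\subset\mathbb{R}^d$ which is centrally symmetric, i.e. $v\in V$ implies $-v\in V$. Let $V^+$ be the set of vectors in $V$ whose first non-zero coordinate is positive, so that $V$ is the disjoint union of $V^+$ and $-V^+$. Let $\mathcal{A}\subseteq\mathbb{R}^d$ be a measurable set which is centrally antisymmetric, i.e. $\mathcal{A}\cap(-\mathcal{A})=\emptyset$. Let $T$ be a random orthogonal matrix uniformly distributed on $O(d)$ (normalized Haar measure), and let $(r_v)_{v\in V}$ be independent random variables, each with the $\chi$-distribution with $d$ degrees of freedom, independent of $T$. Define $$\hat p^V=\frac{1}{|V|}\sum_{v\in V} I_{\mathcal{A}}(r_v\,Tv),\qquad \hat p^V_{AT}=\frac{1}{|V|}\sum_{v\in V^+}\Big(I_{\mathcal{A}}(r_v\,Tv)+I_{\mathcal{A}}(-r_v\,Tv)\Big).$$ Then $\operatorname{Var}(\hat p^V_{AT})\le \operatorname{Var}(\hat p^V)$.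
   Context: $I_{\mathcal{A}}$ denotes the indicator function of $\mathcal{A}$. The $\chi$-distribution with $d$ degrees of freedom is the distribution of $\|Z\|$ for $Z$ a $d$-dimensional standard normal vector. Both $\hat p^V$ and $\hat p^V_{AT}$ are estimators of $P\{Z\in\mathcal{A}\}$ for $Z\sim N_d(0,I)$. *)

theory Defs
  imports "HOL-Analysis.Analysis" "HOL-Probability.Probability"
begin

definition chi_distr :: "nat \<Rightarrow> real measure" where
  "chi_distr d = distr (PiM {..<d} (\<lambda>_. density lborel std_normal_density)) borel
                      (\<lambda>z. sqrt (\<Sum>i<d. (z i)\<^sup>2))"

definition is_haar_orthogonal :: "(real^'d^'d) measure \<Rightarrow> bool" where
  "is_haar_orthogonal \<mu> \<longleftrightarrow>
     prob_space \<mu> \<and> sets \<mu> = sets borel \<and>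
     (AE Q in \<mu>. orthogonal_matrix Q) \<and>
     (\<forall>Q0. orthogonal_matrix Q0 \<longrightarrow> distr \<mu> borel (\<lambda>Q. Q0 ** Q) = \<mu>)"

definition first_nonzero_pos :: "real^('d::{finite,linorder}) \<Rightarrow> bool" where
  "first_nonzero_pos x \<longleftrightarrow> (\<exists>i. 0 < x $ i \<and> (\<forall>j<i. x $ j = 0))"

definition pos_part_set :: "(real^('d::{finite,linorder})) set \<Rightarrow> (real^('d::{finite,linorder})) set" where
  "pos_part_set V = {v \<in> V. first_nonzero_pos v}"

end

theory Submission imports Defs begin

lemma (in prob_space) indep_groups_prob:
  fixes E :: "'i \<Rightarrow> 'a set set"
  assumes ind: "indep_sets E I" and stab: "\<And>i. i\<in>I \<Longrightarrow> Int_stable (E i)"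
   and K: "Ka \<subseteq> I" "Kb \<subseteq> I" "Ka \<inter> Kb = {}"
   and Xa: "Xa \<in> measurable (sigma (space M) (\<Union>(E ` Ka))) Sa"
   and Xb: "Xb \<in> measurable (sigma (space M) (\<Union>(E ` Kb))) Sb"
   and A: "A \<in> sets Sa" and B: "B \<in> sets Sb"
  shows "prob ((Xa -` A \<inter> space M) \<inter> (Xb -` B \<inter> space M)) = prob (Xa -` A \<inter> space M) * prob (Xb -` B \<inter> space M)"
proof -
  have ind2: "indep_sets E (\<Union>j\<in>UNIV. case_bool Ka Kb j)"
    by (rule indep_sets_mono_index[OF _ ind]) (use K in \<open>auto split: bool.splits\<close>)
  have c: "indep_sets (\<lambda>j. sigma_sets (space M) (\<Union>i\<in>case_bool Ka Kb j. E i)) UNIV"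
    by (rule indep_sets_collect_sigma[OF ind2]) (use stab K in \<open>auto simp: disjoint_family_on_def split: bool.splits\<close>)
  have Ev: "\<And>i. i \<in> I \<Longrightarrow> E i \<subseteq> events" using ind by (auto simp: indep_sets_def)
  have G: "(\<Union>i\<in>K. E i) \<subseteq> Pow (space M)" if "K \<subseteq> I" for K
    using Ev that sets.sets_into_space by blast
  have sa: "Xa -` A \<inter> space M \<in> sigma_sets (space M) (\<Union>i\<in>Ka. E i)"
    using measurable_sets[OF Xa A] G[OF K(1)] by simp
  have sb: "Xb -` B \<inter> space M \<in> sigma_sets (space M) (\<Union>i\<in>Kb. E i)"
    using measurable_sets[OF Xb B] G[OF K(2)] by simp
  have "prob (\<Inter>j\<in>UNIV. case_bool (Xa -` A \<inter> space M) (Xb -` B \<inter> space M) j)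
      = (\<Prod>j\<in>UNIV. prob (case_bool (Xa -` A \<inter> space M) (Xb -` B \<inter> space M) j))"
    by (rule indep_setsD[OF c]) (use sa sb in \<open>auto split: bool.splits\<close>)
  then show ?thesis by (simp add: UNIV_bool Int_commute mult.commute)
qed

lemma (in prob_space) pair_distr_from_prob:
  assumes rvs: "random_variable S X" "random_variable T Y"
    and P: "\<And>A B. A \<in> sets S \<Longrightarrow> B \<in> sets T \<Longrightarrow>
       prob ((X -` A \<inter> space M) \<inter> (Y -` B \<inter> space M)) = prob (X -` A \<inter> space M) * prob (Y -` B \<inter> space M)"
  shows "distr M S X \<Otimes>\<^sub>M distr M T Y = distr M (S \<Otimes>\<^sub>M T) (\<lambda>x. (X x, Y x))" (is "?S \<Otimes>\<^sub>M ?T = ?J")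
proof -
  have XY: "random_variable (S \<Otimes>\<^sub>M T) (\<lambda>x. (X x, Y x))"
    using rvs by (rule measurable_Pair)
  interpret X: prob_space ?S by (rule prob_space_distr) fact
  interpret Y: prob_space ?T by (rule prob_space_distr) fact
  interpret XY: pair_prob_space ?S ?T ..
  show "?S \<Otimes>\<^sub>M ?T = ?J"
  proof (rule pair_measure_eqI)
    show "sigma_finite_measure ?S" ..
    show "sigma_finite_measure ?T" ..
    fix A B assume A: "A \<in> sets ?S" and B: "B \<in> sets ?T"
    have "emeasure ?J (A \<times> B) = emeasure M ((\<lambda>x. (X x, Y x)) -` (A \<times> B) \<inter> space M)"
      using A B by (intro emeasure_distr[OF XY]) auto
    also have "\<dots> = emeasure M ((X -` A \<inter> space M) \<inter> (Y -` B \<inter> space M))"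
      by (intro arg_cong[where f="emeasure M"]) auto
    also have "\<dots> = emeasure M (X -` A \<inter> space M) * emeasure M (Y -` B \<inter> space M)"
      using P[of A B] A B rvs
      by (simp add: emeasure_eq_measure measure_nonneg ennreal_mult measurable_sets sets.Int)
    also have "\<dots> = emeasure ?S A * emeasure ?T B"
      using rvs A B by (simp add: emeasure_distr)
    finally show "emeasure ?S A * emeasure ?T B = emeasure ?J (A \<times> B)" by simp
  qed simp
qed

lemma key_pair:
  fixes T :: "'w \<Rightarrow> 'm::topological_space" and r :: "'v \<Rightarrow> 'w \<Rightarrow> real"
    and h :: "'m \<times> (real \<times> real) \<Rightarrow> real"
  assumes Mp: "prob_space M" and T_meas: "T \<in> borel_measurable M"
    and r_meas: "\<forall>v\<in>V. r v \<in> borel_measurable M"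
    and r_chi: "\<forall>v\<in>V. distr M borel (r v) = chi"
    and indep: "prob_space.indep_sets M
        (\<lambda>i. case i of None \<Rightarrow> {T -` B \<inter> space M | B. B \<in> sets (borel :: 'm measure)}
                     | Some v \<Rightarrow> {r v -` B \<inter> space M | B. B \<in> sets (borel :: real measure)})
        (insert None (Some ` V))"
    and abce: "a \<in> V" "b \<in> V" "c \<in> V" "e \<in> V" "a \<noteq> b" "c \<noteq> e"
    and h: "h \<in> borel_measurable (borel \<Otimes>\<^sub>M (borel \<Otimes>\<^sub>M borel))"
  shows "(\<integral>\<omega>. h (T \<omega>, (r a \<omega>, r b \<omega>)) \<partial>M) = (\<integral>\<omega>. h (T \<omega>, (r c \<omega>, r e \<omega>)) \<partial>M)"
proof -
  interpret prob_space M by (rule Mp)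
  define E where "E = (\<lambda>i. case i of None \<Rightarrow> {T -` B \<inter> space M | B. B \<in> sets (borel :: 'm measure)}
                     | Some v \<Rightarrow> {r v -` B \<inter> space M | B. B \<in> sets (borel :: real measure)})"
  define I where "I = insert None (Some ` V)"
  have ind: "indep_sets E I" using indep unfolding E_def I_def .
  have stab: "Int_stable (E i)" for i
  proof (cases i)
    case None
    show ?thesis unfolding None E_def
      unfolding Int_stable_def
      by (clarsimp, rename_tac B1 B2, rule_tac x="B1 \<inter> B2" in exI, auto)
  next
    case (Some v)
    show ?thesis unfolding Some E_def
      unfolding Int_stable_def
      by (clarsimp, rename_tac B1 B2, rule_tac x="B1 \<inter> B2" in exI, auto)
  qed
  have EP: "E i \<subseteq> Pow (space M)" for i
    unfolding E_def by (auto split: option.splits)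
  have gen_meas: "f \<in> measurable (sigma (space M) G) borel"
    if "{f -` B \<inter> space M | B. B \<in> sets (borel :: 'x measure)} \<subseteq> G" "G \<subseteq> Pow (space M)"
       for f :: "'w \<Rightarrow> 'x::topological_space" and G
  proof (rule measurableI)
    fix A :: "'x set" assume "A \<in> sets borel"
    then have "f -` A \<inter> space M \<in> G" using that by blast
    then show "f -` A \<inter> space (sigma (space M) G) \<in> sets (sigma (space M) G)"
      using that by (simp add: sets_measure_of space_measure_of)
  qed auto
  have dist: "distr M (borel \<Otimes>\<^sub>M (borel \<Otimes>\<^sub>M borel)) (\<lambda>\<omega>. (T \<omega>, (r x \<omega>, r y \<omega>)))
      = distr M borel T \<Otimes>\<^sub>M (chi \<Otimes>\<^sub>M chi)" if xy: "x \<in> V" "y \<in> V" "x \<noteq> y" for x y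
  proof -
    have rx: "random_variable borel (r x)" and ry: "random_variable borel (r y)"
      using r_meas xy by auto
    have gx: "r x \<in> measurable (sigma (space M) (\<Union>(E ` {Some x}))) borel"
      by (rule gen_meas) (use EP in \<open>auto simp: E_def\<close>)
    have gy: "r y \<in> measurable (sigma (space M) (\<Union>(E ` {Some y}))) borel"
      by (rule gen_meas) (use EP in \<open>auto simp: E_def\<close>)
    have gT: "T \<in> measurable (sigma (space M) (\<Union>(E ` {None}))) borel"
      by (rule gen_meas) (use EP in \<open>auto simp: E_def\<close>)
    have G: "(\<Union>(E ` {Some x, Some y})) \<subseteq> Pow (space M)" using EP by auto
    have gxy: "(\<lambda>\<omega>. (r x \<omega>, r y \<omega>)) \<in> measurable (sigma (space M) (\<Union>(E ` {Some x, Some y}))) (borel \<Otimes>\<^sub>M borel)"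
      by (intro measurable_Pair gen_meas[OF _ G] gen_meas[OF _ G]) (auto simp: E_def)
    have d2: "distr M borel (r x) \<Otimes>\<^sub>M distr M borel (r y) = distr M (borel \<Otimes>\<^sub>M borel) (\<lambda>\<omega>. (r x \<omega>, r y \<omega>))"
      by (rule pair_distr_from_prob[OF rx ry], rule indep_groups_prob[OF ind stab _ _ _ gx gy])
         (use xy in \<open>auto simp: I_def\<close>)
    have d1: "distr M borel T \<Otimes>\<^sub>M distr M (borel \<Otimes>\<^sub>M borel) (\<lambda>\<omega>. (r x \<omega>, r y \<omega>)) = distr M (borel \<Otimes>\<^sub>M (borel \<Otimes>\<^sub>M borel)) (\<lambda>\<omega>. (T \<omega>, (r x \<omega>, r y \<omega>)))"
      by (rule pair_distr_from_prob[OF T_meas], use rx ry in \<open>simp add: measurable_Pair\<close>, rule indep_groups_prob[OF ind stab _ _ _ gT gxy])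
         (use xy in \<open>auto simp: I_def\<close>)
    show ?thesis using d1 d2 r_chi xy by simp
  qed
  have m1: "(\<lambda>\<omega>. (T \<omega>, (r x \<omega>, r y \<omega>))) \<in> measurable M (borel \<Otimes>\<^sub>M (borel \<Otimes>\<^sub>M borel))"
    if "x \<in> V" "y \<in> V" for x y
    using that T_meas r_meas by (auto intro!: measurable_Pair)
  have "(\<integral>\<omega>. h (T \<omega>, (r a \<omega>, r b \<omega>)) \<partial>M) = integral\<^sup>L (distr M (borel \<Otimes>\<^sub>M (borel \<Otimes>\<^sub>M borel)) (\<lambda>\<omega>. (T \<omega>, (r a \<omega>, r b \<omega>)))) h"
    by (rule integral_distr[symmetric, OF m1 h]) (use abce in auto)
  also have "\<dots> = integral\<^sup>L (distr M (borel \<Otimes>\<^sub>M (borel \<Otimes>\<^sub>M borel)) (\<lambda>\<omega>. (T \<omega>, (r c \<omega>, r e \<omega>)))) h"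
    using dist abce by simp
  also have "\<dots> = (\<integral>\<omega>. h (T \<omega>, (r c \<omega>, r e \<omega>)) \<partial>M)"
    by (rule integral_distr[OF m1 h]) (use abce in auto)
  finally show ?thesis .
qed

lemma var_compare:
  fixes P Q :: "'i \<Rightarrow> 'w \<Rightarrow> real" and c :: real
  assumes Mp: "prob_space M" and W: "finite W"
    and Pm: "\<And>i. i \<in> W \<Longrightarrow> P i \<in> borel_measurable M"
    and Qm: "\<And>i. i \<in> W \<Longrightarrow> Q i \<in> borel_measurable M"
    and Pb: "\<And>i \<omega>. i \<in> W \<Longrightarrow> \<bar>P i \<omega>\<bar> \<le> B"
    and Qb: "\<And>i \<omega>. i \<in> W \<Longrightarrow> \<bar>Q i \<omega>\<bar> \<le> B"
    and mean: "\<And>i. i \<in> W \<Longrightarrow> (\<integral>\<omega>. P i \<omega> \<partial>M) = (\<integral>\<omega>. Q i \<omega> \<partial>M)"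
    and off: "\<And>i j. i \<in> W \<Longrightarrow> j \<in> W \<Longrightarrow> i \<noteq> j \<Longrightarrow>
        (\<integral>\<omega>. P i \<omega> * P j \<omega> \<partial>M) = (\<integral>\<omega>. Q i \<omega> * Q j \<omega> \<partial>M)"
    and diag: "\<And>i. i \<in> W \<Longrightarrow> (\<integral>\<omega>. Q i \<omega> * Q i \<omega> \<partial>M) \<le> (\<integral>\<omega>. P i \<omega> * P i \<omega> \<partial>M)"
  shows "prob_space.variance M (\<lambda>\<omega>. c * (\<Sum>i\<in>W. Q i \<omega>)) \<le> prob_space.variance M (\<lambda>\<omega>. c * (\<Sum>i\<in>W. P i \<omega>))"
proof -
  interpret prob_space M by (rule Mp)
  have ib: "integrable M f" if "f \<in> borel_measurable M" "\<And>\<omega>. \<bar>f \<omega>\<bar> \<le> K" for f :: "'w \<Rightarrow> real" and K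
    using that by (intro integrable_const_bound[where B=K]) auto
  have bd2: "\<bar>x * y\<bar> \<le> B * B" if "\<bar>x\<bar> \<le> B" "\<bar>y\<bar> \<le> B" for x y :: real
    using that by (simp add: abs_mult mult_mono')
  have gen: "(\<integral>\<omega>. c * (\<Sum>i\<in>W. R i \<omega>) \<partial>M) = c * (\<Sum>i\<in>W. \<integral>\<omega>. R i \<omega> \<partial>M)
      \<and> (\<integral>\<omega>. (c * (\<Sum>i\<in>W. R i \<omega>))\<^sup>2 \<partial>M) = c\<^sup>2 * (\<Sum>i\<in>W. \<Sum>j\<in>W. \<integral>\<omega>. R i \<omega> * R j \<omega> \<partial>M)
      \<and> integrable M (\<lambda>\<omega>. c * (\<Sum>i\<in>W. R i \<omega>)) \<and> integrable M (\<lambda>\<omega>. (c * (\<Sum>i\<in>W. R i \<omega>))\<^sup>2)"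
    if Rm: "\<And>i. i \<in> W \<Longrightarrow> R i \<in> borel_measurable M" and Rb: "\<And>i \<omega>. i \<in> W \<Longrightarrow> \<bar>R i \<omega>\<bar> \<le> B" for R
  proof -
    have iR: "integrable M (R i)" if "i \<in> W" for i using ib[OF Rm Rb] that by blast
    have iRR: "integrable M (\<lambda>\<omega>. R i \<omega> * R j \<omega>)" if "i \<in> W" "j \<in> W" for i j
      using that by (intro ib[of _ "B*B"] borel_measurable_times Rm bd2 Rb)
    have sq: "(c * (\<Sum>i\<in>W. R i \<omega>))\<^sup>2 = c\<^sup>2 * (\<Sum>i\<in>W. \<Sum>j\<in>W. R i \<omega> * R j \<omega>)" for \<omega>
      by (simp add: power2_eq_square sum_product algebra_simps)
    have i1: "integrable M (\<lambda>\<omega>. \<Sum>i\<in>W. R i \<omega>)" using iR by (intro Bochner_Integration.integrable_sum) auto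
    have i2: "integrable M (\<lambda>\<omega>. \<Sum>i\<in>W. \<Sum>j\<in>W. R i \<omega> * R j \<omega>)"
      using iRR by (intro Bochner_Integration.integrable_sum) auto
    show ?thesis
      unfolding sq using i1 i2 iR iRR
      by (simp add: integral_sum)
  qed
  note gP = gen[of P, OF Pm Pb] and gQ = gen[of Q, OF Qm Qb]
  have m: "(\<Sum>i\<in>W. \<integral>\<omega>. Q i \<omega> \<partial>M) = (\<Sum>i\<in>W. \<integral>\<omega>. P i \<omega> \<partial>M)"
    using mean by (intro sum.cong) auto
  have s: "(\<Sum>i\<in>W. \<Sum>j\<in>W. \<integral>\<omega>. Q i \<omega> * Q j \<omega> \<partial>M) \<le> (\<Sum>i\<in>W. \<Sum>j\<in>W. \<integral>\<omega>. P i \<omega> * P j \<omega> \<partial>M)"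
    using off diag by (intro sum_mono) (metis order_refl)
  have s2: "c\<^sup>2 * (\<Sum>i\<in>W. \<Sum>j\<in>W. \<integral>\<omega>. Q i \<omega> * Q j \<omega> \<partial>M) \<le> c\<^sup>2 * (\<Sum>i\<in>W. \<Sum>j\<in>W. \<integral>\<omega>. P i \<omega> * P j \<omega> \<partial>M)"
    using s by (intro mult_left_mono) auto
  have vP: "variance (\<lambda>\<omega>. c * (\<Sum>i\<in>W. P i \<omega>)) = (\<integral>\<omega>. (c * (\<Sum>i\<in>W. P i \<omega>))\<^sup>2 \<partial>M) - (\<integral>\<omega>. c * (\<Sum>i\<in>W. P i \<omega>) \<partial>M)\<^sup>2"
    by (rule variance_eq) (use gP in auto)
  have vQ: "variance (\<lambda>\<omega>. c * (\<Sum>i\<in>W. Q i \<omega>)) = (\<integral>\<omega>. (c * (\<Sum>i\<in>W. Q i \<omega>))\<^sup>2 \<partial>M) - (\<integral>\<omega>. c * (\<Sum>i\<in>W. Q i \<omega>) \<partial>M)\<^sup>2"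
    by (rule variance_eq) (use gQ in auto)
  show ?thesis
    unfolding vP vQ using gP gQ m s2 by (cases "c = 0") auto
qed

lemma fnz_not: "first_nonzero_pos v \<Longrightarrow> \<not> first_nonzero_pos (- v)"
  for v :: "real^('d::{finite,linorder})"
proof
  assume "first_nonzero_pos v" "first_nonzero_pos (- v)"
  then obtain i i' where i: "0 < v $ i" "\<forall>j<i. v $ j = 0" and i': "0 < (- v) $ i'" "\<forall>j<i'. (- v) $ j = 0"
    unfolding first_nonzero_pos_def by blast
  show False
  proof (cases i i' rule: linorder_cases)
    case less then have "(- v) $ i = 0" using i'(2) by blast
    then show ?thesis using i(1) by simp
  next
    case equal then show ?thesis using i i' by simp
  next
    case greater then have "v $ i' = 0" using i(2) by blast
    then show ?thesis using i'(1) by simp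
  qed
qed

lemma fnz_ex: "v \<noteq> 0 \<Longrightarrow> first_nonzero_pos v \<or> first_nonzero_pos (- v)"
  for v :: "real^('d::{finite,linorder})"
proof -
  assume "v \<noteq> 0"
  then have ne: "{i. v $ i \<noteq> 0} \<noteq> {}" by (auto simp: vec_eq_iff)
  define i where "i = Min {i. v $ i \<noteq> 0}"
  have vi: "v $ i \<noteq> 0" using Min_in[OF _ ne] unfolding i_def by auto
  have lt: "\<forall>j<i. v $ j = 0"
  proof (intro allI impI)
    fix j assume j: "j < i"
    show "v $ j = 0"
    proof (rule ccontr)
      assume "v $ j \<noteq> 0"
      then have "i \<le> j" unfolding i_def by (intro Min_le) auto
      then show False using j by simp
    qed
  qed
  show ?thesis
  proof (cases "v $ i > 0")
    case True then show ?thesis unfolding first_nonzero_pos_def using lt by blast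
  next
    case False then have "(- v) $ i > 0" using vi by simp
    then show ?thesis unfolding first_nonzero_pos_def using lt by auto
  qed
qed

lemma mv_meas: "(\<lambda>t::real^'n^'m. t *v p) \<in> borel_measurable borel"
proof (rule borel_measurable_continuous_onI)
  show "continuous_on UNIV (\<lambda>t::real^'n^'m. t *v p)"
    unfolding matrix_vector_mult_def
    by (intro continuous_on_vec_lambda continuous_on_sum continuous_on_mult continuous_on_component continuous_on_id continuous_on_const)
qed

lemma h1_meas:
  fixes A :: "(real^'n) set"
  assumes "A \<in> sets borel"
  shows "(\<lambda>z::(real^'n^'n) \<times> (real \<times> real). indicator A (fst (snd z) *\<^sub>R (fst z *v p)) :: real)
     \<in> borel_measurable (borel \<Otimes>\<^sub>M (borel \<Otimes>\<^sub>M borel))"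
proof -
  have "(\<lambda>z::(real^'n^'n) \<times> (real \<times> real). fst (snd z) *\<^sub>R (fst z *v p)) \<in> borel_measurable (borel \<Otimes>\<^sub>M (borel \<Otimes>\<^sub>M borel))"
    by (intro borel_measurable_scaleR measurable_compose[OF measurable_fst mv_meas]
        measurable_compose[OF measurable_snd measurable_fst])
  then show ?thesis by (rule measurable_compose[OF _ borel_measurable_indicator[OF assms]])
qed

lemma h2_meas:
  fixes A :: "(real^'n) set"
  assumes "A \<in> sets borel"
  shows "(\<lambda>z::(real^'n^'n) \<times> (real \<times> real). indicator A (fst (snd z) *\<^sub>R (fst z *v p)) * indicator A (snd (snd z) *\<^sub>R (fst z *v q)) :: real)
     \<in> borel_measurable (borel \<Otimes>\<^sub>M (borel \<Otimes>\<^sub>M borel))"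
proof -
  have "(\<lambda>z::(real^'n^'n) \<times> (real \<times> real). snd (snd z) *\<^sub>R (fst z *v q)) \<in> borel_measurable (borel \<Otimes>\<^sub>M (borel \<Otimes>\<^sub>M borel))"
    by (intro borel_measurable_scaleR measurable_compose[OF measurable_fst mv_meas]
        measurable_compose[OF measurable_snd measurable_snd])
  then have "(\<lambda>z::(real^'n^'n) \<times> (real \<times> real). indicator A (snd (snd z) *\<^sub>R (fst z *v q)) :: real) \<in> borel_measurable (borel \<Otimes>\<^sub>M (borel \<Otimes>\<^sub>M borel))"
    by (rule measurable_compose[OF _ borel_measurable_indicator[OF assms]])
  then show ?thesis by (intro borel_measurable_times h1_meas assms)
qed

theorem theorem2:
  fixes V :: "(real^('d::{finite,linorder})) set"
    and A :: "(real^('d::{finite,linorder})) set"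
    and M :: "'w measure"
    and T :: "'w \<Rightarrow> real^('d::{finite,linorder})^('d::{finite,linorder})"
    and r :: "real^('d::{finite,linorder}) \<Rightarrow> 'w \<Rightarrow> real"
  assumes d2: "CARD('d::{finite,linorder}) \<ge> 2"
    and V_fin: "finite V"
    and V_sphere: "V \<subseteq> sphere 0 1"
    and V_sym: "\<forall>v\<in>V. - v \<in> V"
    and A_meas: "A \<in> sets borel"
    and A_anti: "A \<inter> uminus ` A = {}"
    and M_prob: "prob_space M"
    and T_meas: "T \<in> borel_measurable M"
    and T_haar: "is_haar_orthogonal (distr M borel T)"
    and r_meas: "\<forall>v\<in>V. r v \<in> borel_measurable M"
    and r_chi: "\<forall>v\<in>V. distr M borel (r v) = chi_distr CARD('d::{finite,linorder})"
    and indep: "prob_space.indep_sets M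
        (\<lambda>i. case i of None \<Rightarrow> {T -` B \<inter> space M | B. B \<in> sets (borel :: (real^('d::{finite,linorder})^('d::{finite,linorder})) measure)}
                     | Some v \<Rightarrow> {r v -` B \<inter> space M | B. B \<in> sets (borel :: real measure)})
        (insert None (Some ` V))"
  shows "prob_space.variance M
           (\<lambda>\<omega>. (1 / real (card V)) * (\<Sum>v\<in>pos_part_set V.
               indicator A (r v \<omega> *\<^sub>R (T \<omega> *v v)) + indicator A (- (r v \<omega> *\<^sub>R (T \<omega> *v v)))))
         \<le> prob_space.variance M
           (\<lambda>\<omega>. (1 / real (card V)) * (\<Sum>v\<in>V. indicator A (r v \<omega> *\<^sub>R (T \<omega> *v v))))"
proof -
  interpret p: prob_space M by (rule M_prob)
  define W where "W = pos_part_set V"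
  define Y where "Y = (\<lambda>a p \<omega>. indicator A (r a \<omega> *\<^sub>R (T \<omega> *v p)) :: real)"
  define h1 where "h1 = (\<lambda>p (z::(real^('d::{finite,linorder})^('d::{finite,linorder})) \<times> (real \<times> real)). indicator A (fst (snd z) *\<^sub>R (fst z *v p)) :: real)"
  define h2 where "h2 = (\<lambda>p q (z::(real^('d::{finite,linorder})^('d::{finite,linorder})) \<times> (real \<times> real)). indicator A (fst (snd z) *\<^sub>R (fst z *v p)) * indicator A (snd (snd z) *\<^sub>R (fst z *v q)) :: real)"
  have h1m: "h1 p \<in> borel_measurable (borel \<Otimes>\<^sub>M (borel \<Otimes>\<^sub>M borel))" for p
    unfolding h1_def by (rule h1_meas[OF A_meas])
  have h2m: "h2 p q \<in> borel_measurable (borel \<Otimes>\<^sub>M (borel \<Otimes>\<^sub>M borel))" for p q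
    unfolding h2_def by (rule h2_meas[OF A_meas])
  have neg: "x *\<^sub>R (t *v (- v)) = - (x *\<^sub>R (t *v v))" for x :: real and t :: "real^('d::{finite,linorder})^('d::{finite,linorder})" and v
    by (simp add: linear_neg[OF matrix_vector_mul_linear])
  have V0: "v \<noteq> 0" if "v \<in> V" for v using V_sphere that by auto
  have WV: "W \<subseteq> V" unfolding W_def pos_part_set_def by auto
  have nW: "- u \<notin> W" if "u \<in> W" for u using that fnz_not unfolding W_def pos_part_set_def by auto
  have nV: "- u \<in> V" if "u \<in> W" for u using that WV V_sym by auto
  have nuV: "- u \<noteq> u" if "u \<in> V" for u using V0[OF that] by (auto simp: vec_eq_iff)
  have W_fin: "finite W" using WV V_fin finite_subset by blast
  have Vsplit: "V = W \<union> uminus ` W"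
  proof
    show "V \<subseteq> W \<union> uminus ` W"
    proof
      fix v assume v: "v \<in> V"
      show "v \<in> W \<union> uminus ` W"
      proof (cases "first_nonzero_pos v")
        case True then show ?thesis using v unfolding W_def pos_part_set_def by auto
      next
        case False
        then have "first_nonzero_pos (- v)" using fnz_ex V0[OF v] by blast
        then have "- v \<in> W" using v V_sym unfolding W_def pos_part_set_def by auto
        then have "- (- v) \<in> uminus ` W" by blast
        then show ?thesis by simp
      qed
    qed
    show "W \<union> uminus ` W \<subseteq> V" using WV nV by auto
  qed
  have disj: "W \<inter> uminus ` W = {}" using nW by auto
  have sumV: "(\<Sum>v\<in>V. Y v v \<omega>) = (\<Sum>v\<in>W. Y v v \<omega> + Y (- v) (- v) \<omega>)" for \<omega>
  proof -
    have "(\<Sum>v\<in>V. Y v v \<omega>) = (\<Sum>v\<in>W. Y v v \<omega>) + (\<Sum>v\<in>uminus ` W. Y v v \<omega>)"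
      unfolding Vsplit using W_fin disj by (intro sum.union_disjoint) auto
    also have "(\<Sum>v\<in>uminus ` W. Y v v \<omega>) = (\<Sum>v\<in>W. Y (- v) (- v) \<omega>)"
      by (subst sum.reindex) (auto simp: inj_on_def)
    finally show ?thesis by (simp add: sum.distrib)
  qed
  have lhs: "(\<lambda>\<omega>. (1 / real (card V)) * (\<Sum>v\<in>pos_part_set V.
               indicator A (r v \<omega> *\<^sub>R (T \<omega> *v v)) + indicator A (- (r v \<omega> *\<^sub>R (T \<omega> *v v)))))
      = (\<lambda>\<omega>. (1 / real (card V)) * (\<Sum>v\<in>W. Y v v \<omega> + Y v (- v) \<omega>))"
    unfolding W_def Y_def neg by simp
  have rhs: "(\<lambda>\<omega>. (1 / real (card V)) * (\<Sum>v\<in>V. indicator A (r v \<omega> *\<^sub>R (T \<omega> *v v))))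
      = (\<lambda>\<omega>. (1 / real (card V)) * (\<Sum>v\<in>W. Y v v \<omega> + Y (- v) (- v) \<omega>))"
    using sumV unfolding Y_def by simp
  have Yh1: "Y a p \<omega> = h1 p (T \<omega>, (r a \<omega>, r b \<omega>))" for a b p \<omega>
    unfolding Y_def h1_def by simp
  have Yh2: "Y a p \<omega> * Y b q \<omega> = h2 p q (T \<omega>, (r a \<omega>, r b \<omega>))" for a b p q \<omega>
    unfolding Y_def h2_def by simp
  have Ym: "Y a p \<in> borel_measurable M" if "a \<in> V" for a p
  proof -
    have "(\<lambda>\<omega>. h1 p (T \<omega>, (r a \<omega>, r a \<omega>))) \<in> borel_measurable M"
      using that T_meas r_meas by (intro measurable_compose[OF _ h1m] measurable_Pair) auto
    moreover have "Y a p = (\<lambda>\<omega>. h1 p (T \<omega>, (r a \<omega>, r a \<omega>)))" unfolding Y_def h1_def by (simp add: fun_eq_iff)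
    ultimately show ?thesis by simp
  qed
  have Yb: "\<bar>Y a p \<omega>\<bar> \<le> 1" for a p \<omega> unfolding Y_def by (simp add: indicator_def)
  have Y01: "Y a p \<omega> = 0 \<or> Y a p \<omega> = 1" for a p \<omega> unfolding Y_def by (simp add: indicator_def)
  have ib: "integrable M f" if "f \<in> borel_measurable M" "\<And>\<omega>. \<bar>f \<omega>\<bar> \<le> K" for f :: "'w \<Rightarrow> real" and K
    using that by (intro p.integrable_const_bound[where B=K]) auto
  have iY: "integrable M (Y a p)" if "a \<in> V" for a p using ib[OF Ym[OF that] Yb] .
  have iYY: "integrable M (\<lambda>\<omega>. Y a p \<omega> * Y b q \<omega>)" if "a \<in> V" "b \<in> V" for a b p q
    using that by (intro ib[of _ 1] borel_measurable_times Ym) (auto simp: abs_mult intro: mult_le_one Yb)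
  have KP2: "(\<integral>\<omega>. Y a p \<omega> * Y b q \<omega> \<partial>M) = (\<integral>\<omega>. Y c p \<omega> * Y e q \<omega> \<partial>M)"
    if "a \<in> V" "b \<in> V" "c \<in> V" "e \<in> V" "a \<noteq> b" "c \<noteq> e" for a b c e p q
    unfolding Yh2 by (rule key_pair[OF M_prob T_meas r_meas r_chi indep that h2m])
  have KP1: "(\<integral>\<omega>. Y a p \<omega> \<partial>M) = (\<integral>\<omega>. Y c p \<omega> \<partial>M)" if "a \<in> V" "c \<in> V" for a c p
  proof -
    have "(\<integral>\<omega>. Y a p \<omega> \<partial>M) = (\<integral>\<omega>. h1 p (T \<omega>, (r a \<omega>, r (- a) \<omega>)) \<partial>M)"
      unfolding Y_def h1_def by simp
    also have "\<dots> = (\<integral>\<omega>. h1 p (T \<omega>, (r c \<omega>, r (- c) \<omega>)) \<partial>M)"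
      by (rule key_pair[OF M_prob T_meas r_meas r_chi indep _ _ _ _ _ _ h1m])
         (use that V_sym nuV[of a] nuV[of c] in \<open>auto\<close>)
    also have "\<dots> = (\<integral>\<omega>. Y c p \<omega> \<partial>M)"
      unfolding Y_def h1_def by simp
    finally show ?thesis .
  qed
  have lhs': "(1 / real (card V)) * (\<Sum>v\<in>pos_part_set V.
               indicator A (r v \<omega> *\<^sub>R (T \<omega> *v v)) + indicator A (- (r v \<omega> *\<^sub>R (T \<omega> *v v))))
      = (1 / real (card V)) * (\<Sum>v\<in>W. Y v v \<omega> + Y v (- v) \<omega>)" for \<omega>
    using fun_cong[OF lhs, of \<omega>] by simp
  have rhs': "(1 / real (card V)) * (\<Sum>v\<in>V. indicator A (r v \<omega> *\<^sub>R (T \<omega> *v v)))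
      = (1 / real (card V)) * (\<Sum>v\<in>W. Y v v \<omega> + Y (- v) (- v) \<omega>)" for \<omega>
    using fun_cong[OF rhs, of \<omega>] by simp
  have main: "p.variance (\<lambda>\<omega>. (1 / real (card V)) * (\<Sum>v\<in>W. Y v v \<omega> + Y v (- v) \<omega>))
     \<le> p.variance (\<lambda>\<omega>. (1 / real (card V)) * (\<Sum>v\<in>W. Y v v \<omega> + Y (- v) (- v) \<omega>))"
  proof (rule var_compare[OF M_prob W_fin, where B=2])
    fix i assume i: "i \<in> W"
    then have iV: "i \<in> V" and niV: "- i \<in> V" using WV nV by auto
    show "(\<lambda>\<omega>. Y i i \<omega> + Y (- i) (- i) \<omega>) \<in> borel_measurable M"
      using iV niV by (intro borel_measurable_add Ym)
    show "(\<lambda>\<omega>. Y i i \<omega> + Y i (- i) \<omega>) \<in> borel_measurable M"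
      using iV niV by (intro borel_measurable_add Ym)
    show "\<bar>Y i i \<omega> + Y (- i) (- i) \<omega>\<bar> \<le> 2" for \<omega>
      using Yb[of i i \<omega>] Yb[of "-i" "-i" \<omega>] by linarith
    show "\<bar>Y i i \<omega> + Y i (- i) \<omega>\<bar> \<le> 2" for \<omega>
      using Yb[of i i \<omega>] Yb[of i "-i" \<omega>] by linarith
    show "(\<integral>\<omega>. Y i i \<omega> + Y (- i) (- i) \<omega> \<partial>M) = (\<integral>\<omega>. Y i i \<omega> + Y i (- i) \<omega> \<partial>M)"
      using iY[OF iV] iY[OF niV] KP1[OF niV iV, of "-i"] by simp
    have z: "Y i i \<omega> * Y i (- i) \<omega> = 0" for \<omega>
    proof -
      have "\<not> (x \<in> A \<and> - x \<in> A)" for x using A_anti by auto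
      then show ?thesis unfolding Y_def neg by (simp add: indicator_def)
    qed
    have qq: "(Y i i \<omega> + Y i (- i) \<omega>) * (Y i i \<omega> + Y i (- i) \<omega>) = Y i i \<omega> + Y i (- i) \<omega>" for \<omega>
      using z[of \<omega>] Y01[of i i \<omega>] Y01[of i "-i" \<omega>] by (auto simp: algebra_simps)
    have pp: "Y i i \<omega> + Y (- i) (- i) \<omega> \<le> (Y i i \<omega> + Y (- i) (- i) \<omega>) * (Y i i \<omega> + Y (- i) (- i) \<omega>)" for \<omega>
      using Y01[of i i \<omega>] Y01[of "-i" "-i" \<omega>] by auto
    have "(\<integral>\<omega>. (Y i i \<omega> + Y i (- i) \<omega>) * (Y i i \<omega> + Y i (- i) \<omega>) \<partial>M)
        = (\<integral>\<omega>. Y i i \<omega> + Y i (- i) \<omega> \<partial>M)" by (simp add: qq)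
    also have "\<dots> = (\<integral>\<omega>. Y i i \<omega> + Y (- i) (- i) \<omega> \<partial>M)"
      using iY[OF iV] iY[OF niV] KP1[OF niV iV, of "-i"] by simp
    also have "\<dots> \<le> (\<integral>\<omega>. (Y i i \<omega> + Y (- i) (- i) \<omega>) * (Y i i \<omega> + Y (- i) (- i) \<omega>) \<partial>M)"
    proof (rule integral_mono)
      show "integrable M (\<lambda>\<omega>. Y i i \<omega> + Y (- i) (- i) \<omega>)" using iY[OF iV] iY[OF niV] by simp
      show "integrable M (\<lambda>\<omega>. (Y i i \<omega> + Y (- i) (- i) \<omega>) * (Y i i \<omega> + Y (- i) (- i) \<omega>))"
        using iYY[OF iV iV] iYY[OF iV niV] iYY[OF niV iV] iYY[OF niV niV]
        by (simp add: algebra_simps)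
    qed (rule pp)
    finally show "(\<integral>\<omega>. (Y i i \<omega> + Y i (- i) \<omega>) * (Y i i \<omega> + Y i (- i) \<omega>) \<partial>M)
        \<le> (\<integral>\<omega>. (Y i i \<omega> + Y (- i) (- i) \<omega>) * (Y i i \<omega> + Y (- i) (- i) \<omega>) \<partial>M)" .
  next
    fix i j assume i: "i \<in> W" and j: "j \<in> W" and ij: "i \<noteq> j"
    have iV: "i \<in> V" and niV: "- i \<in> V" and jV: "j \<in> V" and njV: "- j \<in> V" using i j WV nV by auto
    have d: "i \<noteq> - j" "- i \<noteq> j" "- i \<noteq> - j" using i j ij nW[OF i] nW[OF j] by auto
    have e1: "(\<lambda>\<omega>. (Y i i \<omega> + Y (- i) (- i) \<omega>) * (Y j j \<omega> + Y (- j) (- j) \<omega>))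
      = (\<lambda>\<omega>. Y i i \<omega> * Y j j \<omega> + Y i i \<omega> * Y (- j) (- j) \<omega> + Y (- i) (- i) \<omega> * Y j j \<omega> + Y (- i) (- i) \<omega> * Y (- j) (- j) \<omega>)"
      by (simp add: algebra_simps)
    have e2: "(\<lambda>\<omega>. (Y i i \<omega> + Y i (- i) \<omega>) * (Y j j \<omega> + Y j (- j) \<omega>))
      = (\<lambda>\<omega>. Y i i \<omega> * Y j j \<omega> + Y i i \<omega> * Y j (- j) \<omega> + Y i (- i) \<omega> * Y j j \<omega> + Y i (- i) \<omega> * Y j (- j) \<omega>)"
      by (simp add: algebra_simps)
    have k1: "(\<integral>\<omega>. Y i i \<omega> * Y (- j) (- j) \<omega> \<partial>M) = (\<integral>\<omega>. Y i i \<omega> * Y j (- j) \<omega> \<partial>M)"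
      by (rule KP2) (use iV jV njV d ij in auto)
    have k2: "(\<integral>\<omega>. Y (- i) (- i) \<omega> * Y j j \<omega> \<partial>M) = (\<integral>\<omega>. Y i (- i) \<omega> * Y j j \<omega> \<partial>M)"
      by (rule KP2) (use iV jV niV d ij in auto)
    have k3: "(\<integral>\<omega>. Y (- i) (- i) \<omega> * Y (- j) (- j) \<omega> \<partial>M) = (\<integral>\<omega>. Y i (- i) \<omega> * Y j (- j) \<omega> \<partial>M)"
      by (rule KP2) (use iV jV niV njV d ij in auto)
    show "(\<integral>\<omega>. (Y i i \<omega> + Y (- i) (- i) \<omega>) * (Y j j \<omega> + Y (- j) (- j) \<omega>) \<partial>M)
        = (\<integral>\<omega>. (Y i i \<omega> + Y i (- i) \<omega>) * (Y j j \<omega> + Y j (- j) \<omega>) \<partial>M)"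
      unfolding e1 e2 using k1 k2 k3
        iYY[OF iV jV] iYY[OF iV njV] iYY[OF niV jV] iYY[OF niV njV] iYY[OF iV jV]
      by simp
  qed
  show ?thesis using main by (simp only: lhs' rhs')
qed

end
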